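(* Consider the Latex Particles Morphology Formation population balance system described in the context, with $a\le 0$, $0<b<1$ and $v_0=\lambda_{\mathrm{c}}>0$, and let $m,w$ be its solutions. Let $x,y\in\mathbb{R}$ be finite with $x\le y$, and let $T<\infty$ be fixed. Then there exist strictly positive finite quantities $K^x_m, K^x_w$, depending on $x$ but independent of time $t$, such that the moments $M^x(t):=\int_0^\infty v^x m(v,t)\,dv$, $W^x(t):=\int_0^\infty v^x w(v,t)\,dv$ satisfy $M^x(t)\le K^x_m+M^y(t)$ and $W^x(t)\le K^x_w+W^y(t)$ for all $t\in[0,T]$.
   Context: Fix real constants $a,b$ and positive constants $\lambda_{\mathrm{a}},\lambda_{\mathrm{c}},\lambda_{\mathrm{d}},\lambda_{\mathrm{m}},\lambda_{\mathrm{n}},\lambda_{\mathrm{p}},\lambda_{\mathrm{pol1}}$, $\bar\Psi>0$, $\Psi_r>0$, $\Phi_s\in(0,1)$. Set $v_0:=\lambda_{\mathrm{c}}$ and $\mu:=\lambda_{\mathrm{m}}$. The unknowns are densities $m(v,t), w(v,t)$ ($v,t\ge 0$) and scalar functions $V^{\mathrm{mat}}(t),V^{\mathrm{c_m}}(t),V^{\mathrm{c_w}}(t),\Psi(t),V_{\mathrm{pol2}}(t)$. Define $\alpha(v,u,t):=\tilde\alpha_0(t)[v^a+u^a]$, $\tilde\alpha_0(t):=\lambda_{\mathrm{a}}(\Psi(t)+1)^{14/3}$; $g(v,t):=\tilde\varrho_{\mathrm{d}}(t)v^b+\tilde\varrho_{\mathrm{p}}(t)v$, $\tilde\varrho_{\mathrm{p}}(t):=\lambda_{\mathrm{p}}\Psi(t)/V_p(t)$,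 $\tilde\varrho_{\mathrm{d}}(t):=\lambda_{\mathrm{d}}\Phi(t)(\Psi(t)+1)^{2/3}$; $n(v,t):=\tilde\eta_0(t)\delta(v-v_0)$ with $\tilde\eta_0(t):=\lambda_{\mathrm{n}}\Phi(t)$ and $\delta$ the Dirac delta; $\Phi(t):=\max\{V^{\mathrm{mat}}(t)/[(\Psi(t)+1)(V^{\mathrm{mat}}(t)+\lambda_{\mathrm{pol1}})]-\Phi_s,0\}$; $V_p(t):=(\Psi(t)+1)[V^{\mathrm{mat}}(t)+V^{\mathrm{c_m}}(t)+V^{\mathrm{c_w}}(t)+\lambda_{\mathrm{pol1}}]$; $\Sigma_y(t):=(\Psi(t)+1)^{2/3}\int_0^\infty v^b y(v,t)\,dv$ for $y=m,w$. The system is: for all $v,t>0$, $\partial_t m=-\partial_v(g m)+n-\mu m-m(v,t)\int_0^\infty\alpha(v,u,t)m(u,t)\,du+\tfrac12\int_0^v\alpha(v-u,u,t)m(v-u,t)m(u,t)\,du$, $\partial_t w=-\partial_v(g w)+\mu m-w(v,t)\int_0^\infty\alpha(v,u,t)w(u,t)\,du+\tfrac12\int_0^v\alpha(v-u,u,t)w(v-u,t)w(u,t)\,du$, with $m(v,0)=w(v,0)=0$, $m(0,t)=w(0,t)=0$; coupled to the ODEs $\dot V^{\mathrm{mat}}=\lambda_{\mathrm{p}}\frac{\Psi}{V_p}(V^{\mathrm{mat}}+\lambda_{\mathrm{pol1}})-\Phi[\lambda_{\mathrm{c}}\lambda_{\mathrm{n}}+\lambda_{\mathrm{d}}\Sigma_m+\lambda_{\mathrm{d}}\Sigma_w]$,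 $\dot V^{\mathrm{c_m}}=\lambda_{\mathrm{p}}\frac{\Psi}{V_p}V^{\mathrm{c_m}}+\Phi[\lambda_{\mathrm{c}}\lambda_{\mathrm{n}}+\lambda_{\mathrm{d}}\Sigma_m]-\lambda_{\mathrm{m}}V^{\mathrm{c_m}}$, $\dot V^{\mathrm{c_w}}=\lambda_{\mathrm{p}}\frac{\Psi}{V_p}V^{\mathrm{c_w}}+\lambda_{\mathrm{d}}\Phi\Sigma_w+\lambda_{\mathrm{m}}V^{\mathrm{c_m}}$, $\dot\Psi=-\lambda_{\mathrm{p}}\frac{\Psi}{\Psi+1}\frac{\Psi+\Psi_r}{V_{\mathrm{pol2}}+\lambda_{\mathrm{pol1}}}$, $\dot V_{\mathrm{pol2}}=\lambda_{\mathrm{p}}\frac{\Psi}{\Psi+1}$, with $V^{\mathrm{mat}}(0)=V^{\mathrm{c_m}}(0)=V^{\mathrm{c_w}}(0)=V_{\mathrm{pol2}}(0)=0$, $\Psi(0)=\bar\Psi$. Solutions $m,w$ are understood to be non-negative functions. *)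

theory Defs
  imports "HOL-Analysis.Analysis"
begin

record lpmf_params =
  pa :: real
  pb :: real
  lam_a :: real
  lam_c :: real
  lam_d :: real
  lam_m :: real
  lam_n :: real
  lam_p :: real
  lam_pol1 :: real
  Psi_bar :: real
  Psi_r :: real
  Phi_s :: real

definition v0 :: "lpmf_params \<Rightarrow> real" where "v0 P = lam_c P"
definition mu :: "lpmf_params \<Rightarrow> real" where "mu P = lam_m P"

definition params_ok :: "lpmf_params \<Rightarrow> bool" where
  "params_ok P \<longleftrightarrow> lam_a P > 0 \<and> lam_c P > 0 \<and> lam_d P > 0 \<and> lam_m P > 0 \<and> lam_n P > 0
     \<and> lam_p P > 0 \<and> lam_pol1 P > 0 \<and> Psi_bar P > 0 \<and> Psi_r P > 0
     \<and> 0 < Phi_s P \<and> Phi_s P < 1"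

definition Phi :: "lpmf_params \<Rightarrow> (real \<Rightarrow> real) \<Rightarrow> (real \<Rightarrow> real) \<Rightarrow> real \<Rightarrow> real" where
  "Phi P Vmat Psi t =
     max (Vmat t / ((Psi t + 1) * (Vmat t + lam_pol1 P)) - Phi_s P) 0"

definition Vp :: "lpmf_params \<Rightarrow> (real \<Rightarrow> real) \<Rightarrow> (real \<Rightarrow> real) \<Rightarrow> (real \<Rightarrow> real)
                   \<Rightarrow> (real \<Rightarrow> real) \<Rightarrow> real \<Rightarrow> real" where
  "Vp P Vmat Vcm Vcw Psi t = (Psi t + 1) * (Vmat t + Vcm t + Vcw t + lam_pol1 P)"

definition rho_p :: "lpmf_params \<Rightarrow> (real \<Rightarrow> real) \<Rightarrow> (real \<Rightarrow> real) \<Rightarrow> (real \<Rightarrow> real)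
                   \<Rightarrow> (real \<Rightarrow> real) \<Rightarrow> real \<Rightarrow> real" where
  "rho_p P Vmat Vcm Vcw Psi t = lam_p P * Psi t / Vp P Vmat Vcm Vcw Psi t"

definition rho_d :: "lpmf_params \<Rightarrow> (real \<Rightarrow> real) \<Rightarrow> (real \<Rightarrow> real) \<Rightarrow> real \<Rightarrow> real" where
  "rho_d P Vmat Psi t = lam_d P * Phi P Vmat Psi t * (Psi t + 1) powr (2/3)"

definition alpha0 :: "lpmf_params \<Rightarrow> (real \<Rightarrow> real) \<Rightarrow> real \<Rightarrow> real" where
  "alpha0 P Psi t = lam_a P * (Psi t + 1) powr (14/3)"

definition alpha :: "lpmf_params \<Rightarrow> (real \<Rightarrow> real) \<Rightarrow> real \<Rightarrow> real \<Rightarrow> real \<Rightarrow> real" where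
  "alpha P Psi v u t = alpha0 P Psi t * (v powr pa P + u powr pa P)"

definition growth :: "lpmf_params \<Rightarrow> (real \<Rightarrow> real) \<Rightarrow> (real \<Rightarrow> real) \<Rightarrow> (real \<Rightarrow> real)
                   \<Rightarrow> (real \<Rightarrow> real) \<Rightarrow> real \<Rightarrow> real \<Rightarrow> real" where
  "growth P Vmat Vcm Vcw Psi v t =
     rho_d P Vmat Psi t * v powr pb P + rho_p P Vmat Vcm Vcw Psi t * v"

text \<open>Nucleation intensity: \<open>n(v,t) = eta0(t) delta(v - v0)\<close>.\<close>
definition eta0 :: "lpmf_params \<Rightarrow> (real \<Rightarrow> real) \<Rightarrow> (real \<Rightarrow> real) \<Rightarrow> real \<Rightarrow> real" where
  "eta0 P Vmat Psi t = lam_n P * Phi P Vmat Psi t"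

definition Sigma :: "lpmf_params \<Rightarrow> (real \<Rightarrow> real) \<Rightarrow> (real \<Rightarrow> real \<Rightarrow> real) \<Rightarrow> real \<Rightarrow> real" where
  "Sigma P Psi y t = (Psi t + 1) powr (2/3) * (LINT v:{0<..}|lborel. v powr pb P * y v t)"

text \<open>Admissible test functions: continuously differentiable on the reals and vanishing
  for large sizes (they need not vanish at \<open>v = 0\<close>, so that the weak form encodes the
  boundary condition of zero flux at \<open>v = 0\<close>).\<close>
definition test_fun :: "(real \<Rightarrow> real) \<Rightarrow> bool" where
  "test_fun \<phi> \<longleftrightarrow> (\<forall>v. \<phi> differentiable (at v)) \<and> continuous_on UNIV (deriv \<phi>)
                    \<and> (\<exists>R. \<forall>v\<ge>R. \<phi> v = 0)"

definition agg_integrand ::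
  "lpmf_params \<Rightarrow> (real \<Rightarrow> real) \<Rightarrow> (real \<Rightarrow> real) \<Rightarrow> (real \<Rightarrow> real \<Rightarrow> real) \<Rightarrow> real \<Rightarrow> real \<times> real \<Rightarrow> real"
  where
  "agg_integrand P Psi \<phi> y t z = (case z of (v, u) \<Rightarrow>
      alpha P Psi v u t * (\<phi> (v + u) - \<phi> v - \<phi> u) * y v t * y u t)"

definition agg_weak ::
  "lpmf_params \<Rightarrow> (real \<Rightarrow> real) \<Rightarrow> (real \<Rightarrow> real) \<Rightarrow> (real \<Rightarrow> real \<Rightarrow> real) \<Rightarrow> real \<Rightarrow> real" where
  "agg_weak P Psi \<phi> y t =
     1/2 * (LINT z:({0<..} \<times> {0<..})|lborel. agg_integrand P Psi \<phi> y t z)"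

text \<open>The PDEs (with Dirac nucleation source and boundary condition \<open>m(0,t)=w(0,t)=0\<close>)
  are understood in the weak sense in the size variable, the ODEs classically.\<close>
definition lpmf_solution ::
  "lpmf_params \<Rightarrow> real \<Rightarrow> (real \<Rightarrow> real \<Rightarrow> real) \<Rightarrow> (real \<Rightarrow> real \<Rightarrow> real)
   \<Rightarrow> (real \<Rightarrow> real) \<Rightarrow> (real \<Rightarrow> real) \<Rightarrow> (real \<Rightarrow> real) \<Rightarrow> (real \<Rightarrow> real) \<Rightarrow> (real \<Rightarrow> real) \<Rightarrow> bool"
  where
  "lpmf_solution P T m w Vmat Vcm Vcw Psi Vpol2 \<longleftrightarrow>
    (let g = growth P Vmat Vcm Vcw Psi;
         Ph = Phi P Vmat Psi;
         VP = Vp P Vmat Vcm Vcw Psi;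
         Sm = Sigma P Psi m;
         Sw = Sigma P Psi w
     in
    \<comment> \<open>non-negativity, initial and boundary data\<close>
    (\<forall>v t. v \<ge> 0 \<longrightarrow> t \<in> {0..T} \<longrightarrow> m v t \<ge> 0 \<and> w v t \<ge> 0) \<and>
    (\<forall>v. v \<ge> 0 \<longrightarrow> m v 0 = 0 \<and> w v 0 = 0) \<and>
    (\<forall>t\<in>{0..T}. m 0 t = 0 \<and> w 0 t = 0) \<and>
    \<comment> \<open>integrability needed for the terms of the system to make sense\<close>
    (\<forall>t\<in>{0..T}. set_integrable lborel {0<..} (\<lambda>v. m v t)
              \<and> set_integrable lborel {0<..} (\<lambda>v. w v t)
              \<and> set_integrable lborel {0<..} (\<lambda>v. v powr pb P * m v t)
              \<and> set_integrable lborel {0<..} (\<lambda>v. v powr pb P * w v t)) \<and>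
    (\<forall>\<phi> t. test_fun \<phi> \<longrightarrow> t \<in> {0..T} \<longrightarrow>
       set_integrable lborel ({0<..} \<times> {0<..}) (agg_integrand P Psi \<phi> m t)
     \<and> set_integrable lborel ({0<..} \<times> {0<..}) (agg_integrand P Psi \<phi> w t)) \<and>
    \<comment> \<open>weak form of the equation for m\<close>
    (\<forall>\<phi> t. test_fun \<phi> \<longrightarrow> t \<in> {0..T} \<longrightarrow>
       ((\<lambda>s. LINT v:{0<..}|lborel. \<phi> v * m v s) has_real_derivative
          ((LINT v:{0<..}|lborel. deriv \<phi> v * g v t * m v t)
           + eta0 P Vmat Psi t * \<phi> (v0 P)
           - mu P * (LINT v:{0<..}|lborel. \<phi> v * m v t)
           + agg_weak P Psi \<phi> m t)) (at t within {0..T})) \<and>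
    \<comment> \<open>weak form of the equation for w\<close>
    (\<forall>\<phi> t. test_fun \<phi> \<longrightarrow> t \<in> {0..T} \<longrightarrow>
       ((\<lambda>s. LINT v:{0<..}|lborel. \<phi> v * w v s) has_real_derivative
          ((LINT v:{0<..}|lborel. deriv \<phi> v * g v t * w v t)
           + mu P * (LINT v:{0<..}|lborel. \<phi> v * m v t)
           + agg_weak P Psi \<phi> w t)) (at t within {0..T})) \<and>
    \<comment> \<open>the ODEs\<close>
    Vmat 0 = 0 \<and> Vcm 0 = 0 \<and> Vcw 0 = 0 \<and> Vpol2 0 = 0 \<and> Psi 0 = Psi_bar P \<and>
    (\<forall>t\<in>{0..T}.
       (Vmat has_real_derivative
          (lam_p P * Psi t / VP t * (Vmat t + lam_pol1 P)
           - Ph t * (lam_c P * lam_n P + lam_d P * Sm t + lam_d P * Sw t))) (at t within {0..T})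
     \<and> (Vcm has_real_derivative
          (lam_p P * Psi t / VP t * Vcm t + Ph t * (lam_c P * lam_n P + lam_d P * Sm t)
           - lam_m P * Vcm t)) (at t within {0..T})
     \<and> (Vcw has_real_derivative
          (lam_p P * Psi t / VP t * Vcw t + lam_d P * Ph t * Sw t + lam_m P * Vcm t))
          (at t within {0..T})
     \<and> (Psi has_real_derivative
          (- lam_p P * (Psi t / (Psi t + 1)) * ((Psi t + Psi_r P) / (Vpol2 t + lam_pol1 P))))
          (at t within {0..T})
     \<and> (Vpol2 has_real_derivative (lam_p P * (Psi t / (Psi t + 1)))) (at t within {0..T})))"

definition moment :: "(real \<Rightarrow> real \<Rightarrow> real) \<Rightarrow> real \<Rightarrow> real \<Rightarrow> ennreal" where
  "moment y x t = (\<integral>\<^sup>+ v\<in>{0<..}. ennreal (v powr x * y v t) \<partial>lborel)"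

end

theory Submission
  imports Defs
begin

lemma incr_lemma:
  fixes f f' :: "real \<Rightarrow> real"
  assumes D: "\<And>s. s \<in> {0..T} \<Longrightarrow> (f has_real_derivative f' s) (at s within {0..T})"
    and ab: "0 \<le> a" "a \<le> b" "b \<le> T"
    and pos: "\<And>s. a < s \<Longrightarrow> s < b \<Longrightarrow> f' s \<ge> 0"
  shows "f a \<le> f b"
proof (rule DERIV_nonneg_imp_increasing_open[OF ab(2)])
  fix s assume s: "a < s" "s < b"
  have "at s within {0..T} = at s" using s ab by (intro at_within_Icc_at) auto
  then show "\<exists>y. DERIV f s :> y \<and> y \<ge> 0" using D[of s] pos[OF s] s ab by auto
next
  have "continuous_on {0..T} f"
    using D by (meson DERIV_continuous continuous_on_eq_continuous_within)
  then show "continuous_on {a..b} f" by (rule continuous_on_subset) (use ab in auto)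
qed

lemma bump_deriv:
  fixes R v :: real
  shows "((\<lambda>v. (max (R - v) 0)^2) has_real_derivative (-2 * max (R - v) 0)) (at v)"
proof -
  consider "v < R" | "v > R" | "v = R" by linarith
  then show ?thesis
  proof cases
    case 1
    have "((\<lambda>v. (R - v)^2) has_real_derivative (-2 * max (R - v) 0)) (at v)"
      using 1 by (auto intro!: derivative_eq_intros)
    then show ?thesis
      by (rule has_field_derivative_transform_within_open[where S="{..<R}"]) (use 1 in auto)
  next
    case 2
    have "((\<lambda>v. 0) has_real_derivative (-2 * max (R - v) 0)) (at v)" using 2 by simp
    then show ?thesis
      by (rule has_field_derivative_transform_within_open[where S="{R<..}"]) (use 2 in auto)
  next
    case 3
    have "((\<lambda>y. ((max (R - y) 0)^2 - (max (R - R) 0)^2) / (y - R)) \<longlongrightarrow> 0) (at R)"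
    proof (rule Lim_null_comparison)
      show "\<forall>\<^sub>F y in at R. norm (((max (R - y) 0)^2 - (max (R - R) 0)^2) / (y - R)) \<le> \<bar>y - R\<bar>"
      proof (rule eventually_at_filter[THEN iffD2], rule always_eventually, intro allI impI)
        fix y :: real assume "y \<noteq> R"
        have "(max (R - y) 0)^2 \<le> (y - R)^2" by (cases "R \<le> y") (simp_all add: max_def power2_commute)
        then show "norm (((max (R - y) 0)^2 - (max (R - R) 0)^2) / (y - R)) \<le> \<bar>y - R\<bar>"
          using \<open>y \<noteq> R\<close> by (simp add: abs_div power2_eq_square divide_le_eq abs_mult)
      qed
      show "((\<lambda>y. \<bar>y - R\<bar>) \<longlongrightarrow> 0) (at R)"
        by (rule tendsto_eq_intros refl | simp)+
    qed
    then show ?thesis using 3 by (simp add: has_field_derivative_iff)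
  qed
qed

lemma bump_test: "test_fun (\<lambda>v. (max (R - v) 0)^2)"
  and bump_deriv_eq: "deriv (\<lambda>v. (max (R - v) 0)^2) = (\<lambda>v. -2 * max (R - v) 0)"
proof -
  show D: "deriv (\<lambda>v. (max (R - v) 0)^2) = (\<lambda>v. -2 * max (R - v) 0)"
    using bump_deriv DERIV_imp_deriv by blast
  show "test_fun (\<lambda>v. (max (R - v) 0)^2)"
  proof -
    have "\<forall>v. (\<lambda>v. (max (R - v) 0)^2) differentiable (at v)"
      by (metis bump_deriv real_differentiable_def)
    moreover have "continuous_on UNIV (\<lambda>v::real. -2 * max (R - v) 0)"
      by (intro continuous_intros)
    moreover have "\<forall>v\<ge>R. (max (R - v) 0)^2 = 0" by auto
    ultimately show ?thesis unfolding test_fun_def D by blast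
  qed
qed

lemma Psi_pos:
  fixes Psi Vpol2 :: "real \<Rightarrow> real"
  assumes lp: "lp > 0" and p1: "pol1 > 0" and pr: "Pr > 0" and P0: "Psi 0 > 0" and V0: "Vpol2 0 = 0"
    and DPsi: "\<And>t. t\<in>{0..T} \<Longrightarrow> (Psi has_real_derivative
       (- lp * (Psi t / (Psi t + 1)) * ((Psi t + Pr) / (Vpol2 t + pol1)))) (at t within {0..T})"
    and DV: "\<And>t. t\<in>{0..T} \<Longrightarrow> (Vpol2 has_real_derivative (lp * (Psi t / (Psi t + 1)))) (at t within {0..T})"
    and t: "t \<in> {0..T}"
  shows "Psi t > 0"
proof (rule ccontr)
  assume "\<not> Psi t > 0"
  hence neg: "Psi t \<le> 0" by simp
  have cPsi: "continuous_on {0..T} Psi"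
    using DPsi by (meson DERIV_continuous continuous_on_eq_continuous_within)
  define Z where "Z = {s \<in> {0..t}. Psi s \<le> 0}"
  have "closed Z" unfolding Z_def
    by (rule continuous_on_closed_Collect_le[OF continuous_on_subset[OF cPsi]]) (use t in auto)
  moreover have "Z \<noteq> {}" using t neg unfolding Z_def by auto
  moreover have "bdd_below Z" unfolding Z_def by (auto intro: bdd_belowI[of _ 0])
  ultimately have t1Z: "Inf Z \<in> Z" using closed_contains_Inf by blast
  define t1 where "t1 = Inf Z"
  have t1: "0 \<le> t1" "t1 \<le> t" "Psi t1 \<le> 0" using t1Z unfolding t1_def Z_def by auto
  have before: "Psi s > 0" if "0 \<le> s" "s < t1" for s
  proof (rule ccontr)
    assume "\<not> Psi s > 0"
    hence "s \<in> Z" using that t1 unfolding Z_def by auto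
    hence "t1 \<le> s" unfolding t1_def using \<open>bdd_below Z\<close> by (rule cInf_lower)
    thus False using that by simp
  qed
  have Vnn: "Vpol2 s \<ge> 0" if "0 \<le> s" "s \<le> t1" for s
  proof -
    have "Vpol2 0 \<le> Vpol2 s"
    proof (rule incr_lemma[OF DV])
      fix z assume "0 < z" "z < s"
      then have "Psi z > 0" using before that by auto
      then show "lp * (Psi z / (Psi z + 1)) \<ge> 0" using lp by simp
    qed (use that t1 t in auto)
    thus ?thesis using V0 by simp
  qed
  define K where "K = lp * (1 + Pr) / pol1"
  define h where "h = (\<lambda>s. Psi s * exp (K * s))"
  have Dh: "(h has_real_derivative
       (Psi s * (exp (K * s) * K) + (- lp * (Psi s / (Psi s + 1)) * ((Psi s + Pr) / (Vpol2 s + pol1))) * exp (K * s)))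
       (at s within {0..T})" if "s \<in> {0..T}" for s
  proof -
    have e: "((\<lambda>s. exp (K * s)) has_real_derivative (exp (K * s) * K)) (at s within {0..T})"
      by (auto intro!: derivative_eq_intros)
    show ?thesis unfolding h_def by (rule DERIV_mult'[OF DPsi[OF that] e])
  qed
  have "h 0 \<le> h t1"
  proof (rule incr_lemma[OF Dh])
    fix z assume z: "0 < z" "z < t1"
    have ps: "Psi z > 0" using before z by auto
    have vz: "Vpol2 z \<ge> 0" using Vnn z by auto
    have "Psi z + Pr \<le> (1 + Pr) * (Psi z + 1)"
      using ps pr mult_nonneg_nonneg[of Pr "Psi z"] by (simp add: algebra_simps)
    hence a: "(Psi z + Pr) / (Psi z + 1) \<le> 1 + Pr"
      using ps by (simp add: pos_divide_le_eq)
    have b: "1 / (Vpol2 z + pol1) \<le> 1 / pol1"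
      by (rule divide_left_mono) (use vz p1 in auto)
    have "lp * (Psi z / (Psi z + 1)) * ((Psi z + Pr) / (Vpol2 z + pol1))
        = lp * Psi z * ((Psi z + Pr) / (Psi z + 1)) * (1 / (Vpol2 z + pol1))" by simp
    also have "\<dots> \<le> lp * Psi z * (1 + Pr) * (1 / pol1)"
    proof (rule mult_mono)
      show "lp * Psi z * ((Psi z + Pr) / (Psi z + 1)) \<le> lp * Psi z * (1 + Pr)"
        using a lp ps by (intro mult_left_mono) auto
      show "1 / (Vpol2 z + pol1) \<le> 1 / pol1" by (rule b)
      show "0 \<le> lp * Psi z * (1 + Pr)" using lp ps pr by simp
      show "0 \<le> 1 / (Vpol2 z + pol1)" using vz p1 by simp
    qed
    also have "\<dots> = K * Psi z" unfolding K_def by simp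
    finally have "- lp * (Psi z / (Psi z + 1)) * ((Psi z + Pr) / (Vpol2 z + pol1)) + Psi z * K \<ge> 0"
      by (simp add: algebra_simps)
    hence "(- lp * (Psi z / (Psi z + 1)) * ((Psi z + Pr) / (Vpol2 z + pol1)) + Psi z * K) * exp (K * z) \<ge> 0"
      by simp
    then show "Psi z * (exp (K * z) * K) + (- lp * (Psi z / (Psi z + 1)) * ((Psi z + Pr) / (Vpol2 z + pol1))) * exp (K * z) \<ge> 0"
      by (simp add: algebra_simps)
  qed (use t1 t in auto)
  moreover have "h 0 > 0" using P0 unfolding h_def by simp
  moreover have "h t1 \<le> 0" using t1 unfolding h_def by (simp add: mult_nonpos_nonneg)
  ultimately show False by simp
qed

lemma set_int_nonneg:
  fixes f :: "'a \<Rightarrow> real"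
  assumes "\<And>x. x \<in> A \<Longrightarrow> 0 \<le> f x"
  shows "0 \<le> set_lebesgue_integral M A f"
  unfolding set_lebesgue_integral_def
  by (rule integral_nonneg_AE) (auto simp: assms indicator_def)

lemma set_int_nonpos:
  fixes f :: "'a \<Rightarrow> real"
  assumes "\<And>x. x \<in> A \<Longrightarrow> f x \<le> 0"
  shows "set_lebesgue_integral M A f \<le> 0"
proof -
  have "0 \<le> set_lebesgue_integral M A (\<lambda>x. - f x)"
    by (rule set_int_nonneg) (use assms in auto)
  also have "set_lebesgue_integral M A (\<lambda>x. - f x) = - set_lebesgue_integral M A f"
    unfolding set_lebesgue_integral_def by simp
  finally show ?thesis by simp
qed

lemma set_meas:
  fixes f :: "real \<Rightarrow> real"
  assumes "set_integrable lborel {0<..} f"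
  shows "(\<lambda>v. indicator {0<..} v * f v) \<in> borel_measurable lborel"
  using borel_measurable_integrable[OF assms[unfolded set_integrable_def]] by simp

lemma bump_int:
  fixes f :: "real \<Rightarrow> real"
  assumes "set_integrable lborel {0<..} f"
  shows "set_integrable lborel {0<..} (\<lambda>v. (max (R - v) 0)^2 * f v)"
proof (rule set_integrable_bound[of _ _ "\<lambda>v. (max R 0)^2 * f v"])
  show "set_integrable lborel {0<..} (\<lambda>v. (max R 0)^2 * f v)" using assms by simp
  have m: "(\<lambda>v. indicator {0<..} v * f v) \<in> borel_measurable lborel" by (rule set_meas[OF assms])
  have "(\<lambda>v. (max (R - v) 0)^2 * (indicator {0<..} v * f v)) \<in> borel_measurable lborel"
    using m by measurable
  moreover have "(\<lambda>v. indicator {0<..} v *\<^sub>R ((max (R - v) 0)^2 * f v)) = (\<lambda>v. (max (R - v) 0)^2 * (indicator {0<..} v * f v))"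
    by (auto simp: indicator_def)
  ultimately show "set_borel_measurable lborel {0<..} (\<lambda>v. (max (R - v) 0)^2 * f v)"
    unfolding set_borel_measurable_def by simp
  show "AE v in lborel. v \<in> {0<..} \<longrightarrow> norm ((max (R - v) 0)^2 * f v) \<le> norm ((max R 0)^2 * f v)"
  proof (rule always_eventually, intro allI impI)
    fix v :: real assume "v \<in> {0<..}"
    hence "(max (R - v) 0)^2 \<le> (max R 0)^2" by (intro power_mono) auto
    thus "norm ((max (R - v) 0)^2 * f v) \<le> norm ((max R 0)^2 * f v)"
      by (simp add: abs_mult mult_right_mono)
  qed
qed

lemma zero_ae:
  fixes f :: "real \<Rightarrow> real"
  assumes int: "set_integrable lborel {0<..} f" and nn: "\<And>v. v > 0 \<Longrightarrow> f v \<ge> 0"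
    and z: "(LINT v:{0<..}|lborel. (max (R - v) 0)^2 * f v) = 0"
  shows "AE v in lborel. 0 < v \<longrightarrow> v < R \<longrightarrow> f v = 0"
proof -
  define h where "h = (\<lambda>v. indicator {0<..} v *\<^sub>R ((max (R - v) 0)^2 * f v))"
  have hi: "integrable lborel h" using bump_int[OF int, of R] unfolding h_def set_integrable_def .
  have hn: "AE v in lborel. 0 \<le> h v" unfolding h_def using nn by (auto simp: indicator_def)
  have "integral\<^sup>L lborel h = 0" using z unfolding h_def set_lebesgue_integral_def .
  hence "AE v in lborel. h v = 0" using integral_nonneg_eq_0_iff_AE[OF hi hn] by simp
  then show ?thesis
  proof (rule eventually_mono, intro impI)
    fix v :: real assume "h v = 0" "0 < v" "v < R"
    then show "f v = 0" unfolding h_def by (simp add: indicator_def)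
  qed
qed

lemma pointwise_bound:
  fixes v v0 x y fv :: real
  assumes v: "v > 0" and fv: "fv \<ge> 0" and supp: "v < v0 \<Longrightarrow> fv = 0" and v0: "v0 > 0" and xy: "x \<le> y"
  shows "v powr x * fv \<le> max 1 (v0 powr x) * (max (2 - v) 0)^2 * fv + v powr y * fv"
proof (cases "v < v0")
  case True thus ?thesis using supp by simp
next
  case False
  have c0: "0 \<le> max 1 (v0 powr x) * (max (2 - v) 0)^2 * fv" using fv by simp
  have c1: "0 \<le> v powr y * fv" using fv by simp
  show ?thesis
  proof (cases "v \<ge> 1")
    case True
    hence "v powr x \<le> v powr y" using xy by (intro powr_mono) auto
    hence "v powr x * fv \<le> v powr y * fv" using fv by (rule mult_right_mono)
    thus ?thesis using c0 by linarith
  next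
    case v1: False
    have "v powr x \<le> max 1 (v0 powr x)"
    proof (cases "x \<ge> 0")
      case True
      hence "v powr x \<le> 1 powr x" using v v1 by (intro powr_mono2) auto
      thus ?thesis by simp
    next
      case False
      hence "v powr x \<le> v0 powr x" using v0 \<open>\<not> v < v0\<close> by (intro powr_mono2') auto
      thus ?thesis by simp
    qed
    also have "\<dots> \<le> max 1 (v0 powr x) * (max (2 - v) 0)^2"
    proof -
      have e: "max (2 - v) 0 = 2 - v" using v1 by simp
      have "1 \<le> (2 - v)^2" using v1 by (intro one_le_power) simp
      hence "1 \<le> (max (2 - v) 0)^2" by (simp only: e)
      thus ?thesis by (simp add: mult_le_cancel_left1)
    qed
    finally have "v powr x * fv \<le> max 1 (v0 powr x) * (max (2 - v) 0)^2 * fv"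
      using fv by (rule mult_right_mono)
    thus ?thesis using c1 by linarith
  qed
qed

lemma moment_bound:
  fixes f :: "real \<Rightarrow> real" and v0 x y :: real
  assumes int: "set_integrable lborel {0<..} f" and nn: "\<And>v. v > 0 \<Longrightarrow> f v \<ge> 0"
    and supp: "AE v in lborel. 0 < v \<longrightarrow> v < v0 \<longrightarrow> f v = 0" and v0: "v0 > 0" and xy: "x \<le> y"
  shows "(\<integral>\<^sup>+ v\<in>{0<..}. ennreal (v powr x * f v) \<partial>lborel)
     \<le> ennreal (max 1 (v0 powr x) * (LINT v:{0<..}|lborel. (max (2 - v) 0)^2 * f v))
       + (\<integral>\<^sup>+ v\<in>{0<..}. ennreal (v powr y * f v) \<partial>lborel)"
proof -
  define C0 where "C0 = max 1 (v0 powr x)"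
  define mt where "mt = (\<lambda>v. indicator {0<..} v * f v)"
  have mm: "mt \<in> borel_measurable lborel" unfolding mt_def by (rule set_meas[OF int])
  have e1: "(\<integral>\<^sup>+ v\<in>{0<..}. ennreal (v powr z * f v) \<partial>lborel) = (\<integral>\<^sup>+ v. ennreal (v powr z * mt v) \<partial>lborel)" for z
    by (rule nn_integral_cong) (auto simp: mt_def split: split_indicator)
  have hi: "integrable lborel (\<lambda>v. (max (2 - v) 0)^2 * mt v)"
    using bump_int[OF int, of 2] unfolding set_integrable_def mt_def
    by (simp add: mult_ac)
  have e2: "(LINT v:{0<..}|lborel. (max (2 - v) 0)^2 * f v) = integral\<^sup>L lborel (\<lambda>v. (max (2 - v) 0)^2 * mt v)"
    unfolding set_lebesgue_integral_def mt_def by (rule Bochner_Integration.integral_cong) (auto simp: indicator_def)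
  have mtn: "mt v \<ge> 0" for v using nn by (auto simp: mt_def indicator_def)
  have e3: "ennreal (C0 * integral\<^sup>L lborel (\<lambda>v. (max (2 - v) 0)^2 * mt v))
      = (\<integral>\<^sup>+ v. ennreal (C0 * (max (2 - v) 0)^2 * mt v) \<partial>lborel)"
  proof -
    have "integral\<^sup>L lborel (\<lambda>v. C0 * ((max (2 - v) 0)^2 * mt v)) = C0 * integral\<^sup>L lborel (\<lambda>v. (max (2 - v) 0)^2 * mt v)"
      by simp
    moreover have "(\<integral>\<^sup>+ v. ennreal (C0 * ((max (2 - v) 0)^2 * mt v)) \<partial>lborel) = integral\<^sup>L lborel (\<lambda>v. C0 * ((max (2 - v) 0)^2 * mt v))"
    proof (rule nn_integral_eq_integral)
      show "integrable lborel (\<lambda>v. C0 * ((max (2 - v) 0)^2 * mt v))" using hi by simp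
      have "0 \<le> C0" by (simp add: C0_def)
      then show "AE v in lborel. 0 \<le> C0 * ((max (2 - v) 0)^2 * mt v)"
        using mtn by (intro AE_I2) simp
    qed
    ultimately show ?thesis by (simp add: mult_ac)
  qed
  have "(\<integral>\<^sup>+ v. ennreal (v powr x * mt v) \<partial>lborel)
      \<le> (\<integral>\<^sup>+ v. (ennreal (C0 * (max (2 - v) 0)^2 * mt v) + ennreal (v powr y * mt v)) \<partial>lborel)"
  proof (rule nn_integral_mono_AE)
    show "AE v in lborel. ennreal (v powr x * mt v) \<le> ennreal (C0 * (max (2 - v) 0)^2 * mt v) + ennreal (v powr y * mt v)"
      using supp
    proof (rule eventually_mono)
      fix v :: real assume sv: "0 < v \<longrightarrow> v < v0 \<longrightarrow> f v = 0"
      have "v powr x * mt v \<le> C0 * (max (2 - v) 0)^2 * mt v + v powr y * mt v"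
      proof (cases "v > 0")
        case True
        then show ?thesis unfolding C0_def mt_def
          using pointwise_bound[OF True nn[OF True] _ v0 xy] sv by simp
      next
        case False thus ?thesis by (simp add: mt_def)
      qed
      hence "ennreal (v powr x * mt v) \<le> ennreal (C0 * (max (2 - v) 0)^2 * mt v + v powr y * mt v)"
        by (rule ennreal_leI)
      also have "\<dots> = ennreal (C0 * (max (2 - v) 0)^2 * mt v) + ennreal (v powr y * mt v)"
        by (rule ennreal_plus) (use mtn[of v] in \<open>auto simp: C0_def\<close>)
      finally show "ennreal (v powr x * mt v) \<le> ennreal (C0 * (max (2 - v) 0)^2 * mt v) + ennreal (v powr y * mt v)" .
    qed
  qed
  also have "\<dots> = (\<integral>\<^sup>+ v. ennreal (C0 * (max (2 - v) 0)^2 * mt v) \<partial>lborel) + (\<integral>\<^sup>+ v. ennreal (v powr y * mt v) \<partial>lborel)"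
  proof -
    have a: "(\<lambda>v. ennreal (C0 * (max (2 - v) 0)^2 * mt v)) \<in> borel_measurable lborel" using mm by measurable
    have b: "(\<lambda>v. ennreal (v powr y * mt v)) \<in> borel_measurable lborel" using mm by measurable
    show ?thesis by (rule nn_integral_add[OF a b])
  qed
  finally show ?thesis unfolding e1 e2 C0_def[symmetric] e3 .
qed

lemma decr_zero:
  fixes F D :: "real \<Rightarrow> real"
  assumes DF: "\<And>s. s \<in> {0..T} \<Longrightarrow> (F has_real_derivative D s) (at s within {0..T})"
    and Dn: "\<And>s. s \<in> {0..T} \<Longrightarrow> D s \<le> 0"
    and F0: "F 0 = 0" and Fn: "\<And>s. s \<in> {0..T} \<Longrightarrow> F s \<ge> 0"
    and t: "t \<in> {0..T}"
  shows "F t = 0"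
proof -
  have "(\<lambda>s. - F s) 0 \<le> (\<lambda>s. - F s) t"
  proof (rule incr_lemma[where f="\<lambda>s. - F s" and a=0 and b=t])
    show "((\<lambda>s. - F s) has_real_derivative - D s) (at s within {0..T})" if "s \<in> {0..T}" for s
      using DF[OF that] by (rule DERIV_minus)
    fix s assume "0 < s" "s < t" thus "- D s \<ge> 0" using Dn[of s] t by auto
  qed (use t in auto)
  thus ?thesis using F0 Fn[OF t] by simp
qed

lemma bounded_deriv:
  fixes G D :: "real \<Rightarrow> real"
  assumes DG: "\<And>s. s \<in> {0..T} \<Longrightarrow> (G has_real_derivative D s) (at s within {0..T})"
  shows "\<exists>B. \<forall>t\<in>{0..T}. G t \<le> B"
proof -
  have "continuous_on {0..T} G"
    using DG by (meson DERIV_continuous continuous_on_eq_continuous_within)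
  hence "compact (G ` {0..T})" by (rule compact_continuous_image) simp
  hence "bounded (G ` {0..T})" by (rule compact_imp_bounded)
  then obtain a where "\<forall>x\<in>G ` {0..T}. norm x \<le> a" unfolding bounded_iff by blast
  hence "\<forall>t\<in>{0..T}. G t \<le> a" by force
  thus ?thesis by blast
qed

lemma agg_nonpos:
  assumes nn: "\<And>v. v > 0 \<Longrightarrow> y v t \<ge> 0" and la: "lam_a P > 0"
  shows "agg_weak P Psi (\<lambda>v. (max (R - v) 0)^2) y t \<le> 0"
proof -
  have "set_lebesgue_integral lborel ({0<..} \<times> {0<..}) (agg_integrand P Psi (\<lambda>v. (max (R - v) 0)^2) y t) \<le> 0"
  proof (rule set_int_nonpos)
    fix z :: "real \<times> real" assume z: "z \<in> {0<..} \<times> {0<..}"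
    obtain v u where vu: "z = (v, u)" by (cases z)
    have v: "v > 0" and u: "u > 0" using z vu by auto
    have al: "alpha P Psi v u t \<ge> 0" unfolding alpha_def alpha0_def using la by simp
    have "(max (R - (v + u)) 0)^2 \<le> (max (R - v) 0)^2" using u by (intro power_mono) auto
    hence ph: "(max (R - (v + u)) 0)^2 - (max (R - v) 0)^2 - (max (R - u) 0)^2 \<le> 0"
      using zero_le_power2[of "max (R - u) 0"] by linarith
    have "alpha P Psi v u t * ((max (R - (v + u)) 0)^2 - (max (R - v) 0)^2 - (max (R - u) 0)^2) \<le> 0"
      using al ph by (rule mult_nonneg_nonpos)
    hence "alpha P Psi v u t * ((max (R - (v + u)) 0)^2 - (max (R - v) 0)^2 - (max (R - u) 0)^2) * (y v t * y u t) \<le> 0"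
      by (rule mult_nonpos_nonneg) (use nn[OF v] nn[OF u] in simp)
    thus "agg_integrand P Psi (\<lambda>v. (max (R - v) 0)^2) y t z \<le> 0"
      unfolding agg_integrand_def vu by (simp add: mult_ac)
  qed
  thus ?thesis unfolding agg_weak_def by simp
qed

lemma drift_nonpos:
  assumes nn: "\<And>v. v > 0 \<Longrightarrow> y v t \<ge> 0" and gn: "\<And>v. v > 0 \<Longrightarrow> growth P Vmat Vcm Vcw Psi v t \<ge> 0"
  shows "(LINT v:{0<..}|lborel. deriv (\<lambda>v. (max (R - v) 0)^2) v * growth P Vmat Vcm Vcw Psi v t * y v t) \<le> 0"
proof (rule set_int_nonpos)
  fix v :: real assume "v \<in> {0<..}"
  hence v: "v > 0" by simp
  have "-2 * max (R - v) 0 \<le> 0" by simp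
  hence "-2 * max (R - v) 0 * (growth P Vmat Vcm Vcw Psi v t * y v t) \<le> 0"
    by (rule mult_nonpos_nonneg) (use gn[OF v] nn[OF v] in simp)
  thus "deriv (\<lambda>v. (max (R - v) 0)^2) v * growth P Vmat Vcm Vcw Psi v t * y v t \<le> 0"
    unfolding bump_deriv_eq by (simp add: mult_ac)
qed

lemma sign_aux: "0 \<le> c \<Longrightarrow> 0 < a \<Longrightarrow> 0 \<le> c / (a * q) * (q::real)"
  by (cases "q = 0") auto

theorem propositionC2:
  fixes P :: lpmf_params and T x :: real
    and m w :: "real \<Rightarrow> real \<Rightarrow> real"
    and Vmat Vcm Vcw Psi Vpol2 :: "real \<Rightarrow> real"
  assumes "params_ok P"
    and "pa P \<le> 0" and "0 < pb P" and "pb P < 1"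
    and "lpmf_solution P T m w Vmat Vcm Vcw Psi Vpol2"
  shows "\<exists>Km Kw. 0 < Km \<and> 0 < Kw \<and>
           (\<forall>y t. x \<le> y \<longrightarrow> t \<in> {0..T} \<longrightarrow>
              moment m x t \<le> ennreal Km + moment m y t \<and>
              moment w x t \<le> ennreal Kw + moment w y t)"
proof -
  note sol = assms(5)[unfolded lpmf_solution_def Let_def]
  have par: "lam_a P > 0" "lam_c P > 0" "lam_d P > 0" "lam_m P > 0" "lam_n P > 0"
     "lam_p P > 0" "lam_pol1 P > 0" "Psi_bar P > 0" "Psi_r P > 0"
    using assms(1) unfolding params_ok_def by auto
  define g where "g = growth P Vmat Vcm Vcw Psi"
  define Ph where "Ph = Phi P Vmat Psi"
  define VP where "VP = Vp P Vmat Vcm Vcw Psi"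
  define Sm where "Sm = Sigma P Psi m"
  define Sw where "Sw = Sigma P Psi w"
  have nn: "\<And>v t. v \<ge> 0 \<Longrightarrow> t \<in> {0..T} \<Longrightarrow> m v t \<ge> 0 \<and> w v t \<ge> 0"
    using sol by blast
  have init: "\<And>v. v \<ge> 0 \<Longrightarrow> m v 0 = 0 \<and> w v 0 = 0"
    using sol by blast
  have intg: "\<And>t. t \<in> {0..T} \<Longrightarrow> set_integrable lborel {0<..} (\<lambda>v. m v t) \<and> set_integrable lborel {0<..} (\<lambda>v. w v t)"
    using sol by blast
  have wm: "\<And>\<phi> t. test_fun \<phi> \<Longrightarrow> t \<in> {0..T} \<Longrightarrow>
       ((\<lambda>s. LINT v:{0<..}|lborel. \<phi> v * m v s) has_real_derivative
          ((LINT v:{0<..}|lborel. deriv \<phi> v * g v t * m v t)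
           + eta0 P Vmat Psi t * \<phi> (v0 P)
           - mu P * (LINT v:{0<..}|lborel. \<phi> v * m v t)
           + agg_weak P Psi \<phi> m t)) (at t within {0..T})"
    using sol unfolding g_def by blast
  have ww: "\<And>\<phi> t. test_fun \<phi> \<Longrightarrow> t \<in> {0..T} \<Longrightarrow>
       ((\<lambda>s. LINT v:{0<..}|lborel. \<phi> v * w v s) has_real_derivative
          ((LINT v:{0<..}|lborel. deriv \<phi> v * g v t * w v t)
           + mu P * (LINT v:{0<..}|lborel. \<phi> v * m v t)
           + agg_weak P Psi \<phi> w t)) (at t within {0..T})"
    using sol unfolding g_def by blast
  have ini: "Vmat 0 = 0" "Vcm 0 = 0" "Vcw 0 = 0" "Vpol2 0 = 0" "Psi 0 = Psi_bar P"
    using sol by blast+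
  have dVmat: "\<And>t. t\<in>{0..T} \<Longrightarrow> (Vmat has_real_derivative
          (lam_p P * Psi t / VP t * (Vmat t + lam_pol1 P)
           - Ph t * (lam_c P * lam_n P + lam_d P * Sm t + lam_d P * Sw t))) (at t within {0..T})"
    using sol unfolding VP_def Ph_def Sm_def Sw_def by blast
  have dVcm: "\<And>t. t\<in>{0..T} \<Longrightarrow> (Vcm has_real_derivative
          (lam_p P * Psi t / VP t * Vcm t + Ph t * (lam_c P * lam_n P + lam_d P * Sm t)
           - lam_m P * Vcm t)) (at t within {0..T})"
    using sol unfolding VP_def Ph_def Sm_def Sw_def by blast
  have dVcw: "\<And>t. t\<in>{0..T} \<Longrightarrow> (Vcw has_real_derivative
          (lam_p P * Psi t / VP t * Vcw t + lam_d P * Ph t * Sw t + lam_m P * Vcm t))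
          (at t within {0..T})"
    using sol unfolding VP_def Ph_def Sm_def Sw_def by blast
  have dPsi: "\<And>t. t\<in>{0..T} \<Longrightarrow> (Psi has_real_derivative
          (- lam_p P * (Psi t / (Psi t + 1)) * ((Psi t + Psi_r P) / (Vpol2 t + lam_pol1 P))))
          (at t within {0..T})"
    using sol by blast
  have dVpol2: "\<And>t. t\<in>{0..T} \<Longrightarrow> (Vpol2 has_real_derivative (lam_p P * (Psi t / (Psi t + 1)))) (at t within {0..T})"
    using sol by blast
  have Psip: "\<And>t. t \<in> {0..T} \<Longrightarrow> Psi t > 0"
    by (rule Psi_pos[of "lam_p P" "lam_pol1 P" "Psi_r P" Psi Vpol2 T, OF par(6,7,9) _ ini(4) dPsi dVpol2])
       (use ini par in auto)
  define Q where "Q = (\<lambda>s. Vmat s + Vcm s + Vcw s + lam_pol1 P)"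
  have VPQ: "VP s = (Psi s + 1) * Q s" for s unfolding VP_def Q_def Vp_def by simp
  have Qp: "Q t > 0" if t: "t \<in> {0..T}" for t
  proof -
    define D where "D = (\<lambda>t. (lam_p P * Psi t / VP t * (Vmat t + lam_pol1 P)
           - Ph t * (lam_c P * lam_n P + lam_d P * Sm t + lam_d P * Sw t))
        + (lam_p P * Psi t / VP t * Vcm t + Ph t * (lam_c P * lam_n P + lam_d P * Sm t)
           - lam_m P * Vcm t)
        + (lam_p P * Psi t / VP t * Vcw t + lam_d P * Ph t * Sw t + lam_m P * Vcm t) + 0)"
    have DQ: "(Q has_real_derivative D s) (at s within {0..T})" if "s \<in> {0..T}" for s
      unfolding Q_def D_def
      by (intro DERIV_add dVmat dVcm dVcw that DERIV_const)
    have "Q 0 \<le> Q t"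
    proof (rule incr_lemma[where f=Q and a=0 and b=t, OF DQ])
      fix s assume s: "0 < s" "s < t"
      hence sT: "s \<in> {0..T}" using t by auto
      have "D s = lam_p P * Psi s / VP s * Q s"
        unfolding D_def Q_def by (simp add: algebra_simps add_divide_distrib)
      also have "\<dots> = lam_p P * Psi s / ((Psi s + 1) * Q s) * Q s" by (simp only: VPQ)
      also have "\<dots> \<ge> 0" using Psip[OF sT] par by (intro sign_aux) auto
      finally show "D s \<ge> 0" .
    qed (use t in auto)
    thus ?thesis using ini par unfolding Q_def by simp
  qed
  have gnn: "g v t \<ge> 0" if "v > 0" "t \<in> {0..T}" for v t
  proof -
    have "lam_p P * Psi t / VP t \<ge> 0" unfolding VPQ using Psip[OF that(2)] Qp[OF that(2)] par by simp
    moreover have "rho_d P Vmat Psi t \<ge> 0" unfolding rho_d_def Phi_def using par by simp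
    ultimately have "0 \<le> rho_d P Vmat Psi t * v powr pb P + lam_p P * Psi t / VP t * v"
      using that by (intro add_nonneg_nonneg mult_nonneg_nonneg) auto
    thus ?thesis unfolding g_def growth_def rho_p_def VP_def .
  qed
  have mnn: "\<And>v. v > 0 \<Longrightarrow> m v t \<ge> 0" "\<And>v. v > 0 \<Longrightarrow> w v t \<ge> 0" if "t \<in> {0..T}" for t
    using nn that by auto
  define Fm where "Fm = (\<lambda>s. LINT v:{0<..}|lborel. (max (v0 P - v) 0)^2 * m v s)"
  define Fw where "Fw = (\<lambda>s. LINT v:{0<..}|lborel. (max (v0 P - v) 0)^2 * w v s)"
  have zero_int: "(LINT v:{0<..}|lborel. (max (v0 P - v) 0)^2 * y v 0) = 0"
    if "\<And>v. v > 0 \<Longrightarrow> y v 0 = 0" for y :: "real \<Rightarrow> real \<Rightarrow> real"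
  proof -
    have "(\<lambda>v. indicator {0<..} v *\<^sub>R ((max (v0 P - v) 0)^2 * y v 0)) = (\<lambda>v. 0)"
      using that by (auto simp: indicator_def)
    thus ?thesis unfolding set_lebesgue_integral_def by simp
  qed
  have Fm0: "Fm t = 0" if t: "t \<in> {0..T}" for t
  proof (rule decr_zero[OF _ _ _ _ t])
    show "(Fm has_real_derivative
          ((LINT v:{0<..}|lborel. deriv (\<lambda>v. (max (v0 P - v) 0)^2) v * g v s * m v s)
           + eta0 P Vmat Psi s * (max (v0 P - v0 P) 0)^2
           - mu P * (LINT v:{0<..}|lborel. (max (v0 P - v) 0)^2 * m v s)
           + agg_weak P Psi (\<lambda>v. (max (v0 P - v) 0)^2) m s)) (at s within {0..T})"
      if "s \<in> {0..T}" for s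
      unfolding Fm_def by (rule wm[OF bump_test[of "v0 P"] that])
    show "Fm s \<ge> 0" if "s \<in> {0..T}" for s
      unfolding Fm_def by (rule set_int_nonneg) (use mnn[OF that] in auto)
    show "Fm 0 = 0" unfolding Fm_def by (rule zero_int) (use init in auto)
    fix s assume s: "s \<in> {0..T}"
    have a: "(LINT v:{0<..}|lborel. deriv (\<lambda>v. (max (v0 P - v) 0)^2) v * g v s * m v s) \<le> 0"
      unfolding g_def by (rule drift_nonpos) (use mnn[OF s] gnn[OF _ s] in \<open>auto simp: g_def\<close>)
    have b: "agg_weak P Psi (\<lambda>v. (max (v0 P - v) 0)^2) m s \<le> 0"
      by (rule agg_nonpos) (use mnn[OF s] par in auto)
    have c: "0 \<le> mu P * (LINT v:{0<..}|lborel. (max (v0 P - v) 0)^2 * m v s)"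
      using \<open>\<And>s. s \<in> {0..T} \<Longrightarrow> Fm s \<ge> 0\<close>[OF s] par unfolding Fm_def mu_def by simp
    show "(LINT v:{0<..}|lborel. deriv (\<lambda>v. (max (v0 P - v) 0)^2) v * g v s * m v s)
           + eta0 P Vmat Psi s * (max (v0 P - v0 P) 0)^2
           - mu P * (LINT v:{0<..}|lborel. (max (v0 P - v) 0)^2 * m v s)
           + agg_weak P Psi (\<lambda>v. (max (v0 P - v) 0)^2) m s \<le> 0"
      using a b c by simp
  qed
  have Fw0: "Fw t = 0" if t: "t \<in> {0..T}" for t
  proof (rule decr_zero[OF _ _ _ _ t])
    show "(Fw has_real_derivative
          ((LINT v:{0<..}|lborel. deriv (\<lambda>v. (max (v0 P - v) 0)^2) v * g v s * w v s)
           + mu P * Fm s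
           + agg_weak P Psi (\<lambda>v. (max (v0 P - v) 0)^2) w s)) (at s within {0..T})"
      if "s \<in> {0..T}" for s
      unfolding Fw_def Fm_def by (rule ww[OF bump_test[of "v0 P"] that])
    show "Fw s \<ge> 0" if "s \<in> {0..T}" for s
      unfolding Fw_def by (rule set_int_nonneg) (use mnn[OF that] in auto)
    show "Fw 0 = 0" unfolding Fw_def by (rule zero_int) (use init in auto)
    fix s assume s: "s \<in> {0..T}"
    have a: "(LINT v:{0<..}|lborel. deriv (\<lambda>v. (max (v0 P - v) 0)^2) v * g v s * w v s) \<le> 0"
      unfolding g_def by (rule drift_nonpos) (use mnn[OF s] gnn[OF _ s] in \<open>auto simp: g_def\<close>)
    have b: "agg_weak P Psi (\<lambda>v. (max (v0 P - v) 0)^2) w s \<le> 0"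
      by (rule agg_nonpos) (use mnn[OF s] par in auto)
    show "(LINT v:{0<..}|lborel. deriv (\<lambda>v. (max (v0 P - v) 0)^2) v * g v s * w v s)
           + mu P * Fm s
           + agg_weak P Psi (\<lambda>v. (max (v0 P - v) 0)^2) w s \<le> 0"
      using a b Fm0[OF s] by simp
  qed
  have suppm: "AE v in lborel. 0 < v \<longrightarrow> v < v0 P \<longrightarrow> m v t = 0" if t: "t \<in> {0..T}" for t
    by (rule zero_ae) (use intg[OF t] mnn[OF t] Fm0[OF t] in \<open>auto simp: Fm_def\<close>)
  have suppw: "AE v in lborel. 0 < v \<longrightarrow> v < v0 P \<longrightarrow> w v t = 0" if t: "t \<in> {0..T}" for t
    by (rule zero_ae) (use intg[OF t] mnn[OF t] Fw0[OF t] in \<open>auto simp: Fw_def\<close>)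
  obtain Bm where Bm: "\<forall>t\<in>{0..T}. (LINT v:{0<..}|lborel. (max (2 - v) 0)^2 * m v t) \<le> Bm"
    using bounded_deriv[OF wm[OF bump_test[of 2]]] by blast
  obtain Bw where Bw: "\<forall>t\<in>{0..T}. (LINT v:{0<..}|lborel. (max (2 - v) 0)^2 * w v t) \<le> Bw"
    using bounded_deriv[OF ww[OF bump_test[of 2]]] by blast
  define C0 where "C0 = max 1 (v0 P powr x)"
  have v0p: "v0 P > 0" using par unfolding v0_def by simp
  have fin: "moment y x t \<le> ennreal (max 1 (C0 * B)) + moment y z t"
    if int: "set_integrable lborel {0<..} (\<lambda>v. y v t)" and ynn: "\<And>v. v > 0 \<Longrightarrow> y v t \<ge> 0"
      and supp: "AE v in lborel. 0 < v \<longrightarrow> v < v0 P \<longrightarrow> y v t = 0"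
      and B: "(LINT v:{0<..}|lborel. (max (2 - v) 0)^2 * y v t) \<le> B"
      and xz: "x \<le> z"
    for y :: "real \<Rightarrow> real \<Rightarrow> real" and t B z
  proof -
    have "moment y x t \<le> ennreal (C0 * (LINT v:{0<..}|lborel. (max (2 - v) 0)^2 * y v t)) + moment y z t"
      unfolding moment_def C0_def by (rule moment_bound[OF int ynn supp v0p xz])
    also have "ennreal (C0 * (LINT v:{0<..}|lborel. (max (2 - v) 0)^2 * y v t)) \<le> ennreal (max 1 (C0 * B))"
    proof (rule ennreal_leI)
      have "C0 * (LINT v:{0<..}|lborel. (max (2 - v) 0)^2 * y v t) \<le> C0 * B"
        using B by (intro mult_left_mono) (auto simp: C0_def)
      thus "C0 * (LINT v:{0<..}|lborel. (max (2 - v) 0)^2 * y v t) \<le> max 1 (C0 * B)" by simp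
    qed
    finally show ?thesis by (simp add: add_right_mono)
  qed
  show ?thesis
  proof (intro exI conjI allI impI)
    show "0 < max 1 (C0 * Bm)" "0 < max 1 (C0 * Bw)" by auto
    fix y t assume xy: "x \<le> y" and t: "t \<in> {0..T}"
    show "moment m x t \<le> ennreal (max 1 (C0 * Bm)) + moment m y t"
      by (rule fin) (use intg[OF t] mnn[OF t] suppm[OF t] Bm t xy in auto)
    show "moment w x t \<le> ennreal (max 1 (C0 * Bw)) + moment w y t"
      by (rule fin) (use intg[OF t] mnn[OF t] suppw[OF t] Bw t xy in auto)
  qed
qed

end
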